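(* Let $G=(V,E)$ be a finite simple graph with at least one edge and no isolated vertices. Then $\lambda_{\max}(G)\ge 2\rho(G)^{-1}$, and $\lambda_{\max}(G)\ge 2\rho(A)^{-1}\frac{|A|}{|A|+|\delta(A)|}$ for all nonempty $A\subseteq E$. Moreover, if $G$ is uniformly dense, then $\lambda_{\max}(G|A)\ge 2\rho(G)^{-1}$ for all nonempty $A\subseteq E$.
   Context: $c(A)$ is the number of components of $(V,A)$, $\operatorname{rank}(A)=|V|-c(A)$, $\rho(A)=|A|/\operatorname{rank}(A)$, $\rho(G)=\rho(E)$; $G$ is uniformly dense if $\rho(A)\le\rho(G)$ for all nonempty $A\subseteq E$. $G|A$ is the graph obtained from $(V,A)$ by deleting isolated vertices, with vertex set $V|_A$. The normalized Laplacian $L(G)$ acts on $f:V\to\mathbb{R}$ by $Lf(v)=f(v)-\frac{1}{\deg v}\sum_{u:\{u,v\}\in E}f(u)$; its eigenvalues are real and nonnegative, and $\lambda_{\max}(G)$ (resp. $\lambda_{\max}(G|A)$) denotes the largest eigenvalue of $L(G)$ (resp. $L(G|A)$). The boundary of $A$ is $\delta(A)=\{e\in E\setminus A: \text{at least one endpoint of } e \text{ lies in } V|_A\}$. *)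

theory Defs
  imports Complex_Main
begin

definition simple_graph :: "'a set \<Rightarrow> 'a set set \<Rightarrow> bool" where
  "simple_graph V E \<longleftrightarrow> finite V \<and>
     (\<forall>e\<in>E. \<exists>u v. u \<noteq> v \<and> u \<in> V \<and> v \<in> V \<and> e = {u, v})"

definition no_isolated :: "'a set \<Rightarrow> 'a set set \<Rightarrow> bool" where
  "no_isolated V E \<longleftrightarrow> (\<forall>v\<in>V. \<exists>e\<in>E. v \<in> e)"

definition conn_rel :: "'a set \<Rightarrow> 'a set set \<Rightarrow> ('a \<times> 'a) set" where
  "conn_rel V A = ({(u, v). {u, v} \<in> A})\<^sup>* \<inter> (V \<times> V)"

definition num_components :: "'a set \<Rightarrow> 'a set set \<Rightarrow> nat" where
  "num_components V A = card (V // conn_rel V A)"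

definition graph_rank :: "'a set \<Rightarrow> 'a set set \<Rightarrow> nat" where
  "graph_rank V A = card V - num_components V A"

definition density :: "'a set \<Rightarrow> 'a set set \<Rightarrow> real" where
  "density V A = real (card A) / real (graph_rank V A)"

definition uniformly_dense :: "'a set \<Rightarrow> 'a set set \<Rightarrow> bool" where
  "uniformly_dense V E \<longleftrightarrow> (\<forall>A. A \<subseteq> E \<and> A \<noteq> {} \<longrightarrow> density V A \<le> density V E)"

text \<open>Vertex set V|_A of the graph G|A.\<close>
definition restr_vertices :: "'a set set \<Rightarrow> 'a set" where
  "restr_vertices A = \<Union>A"

definition boundary :: "'a set set \<Rightarrow> 'a set set \<Rightarrow> 'a set set" where
  "boundary E A = {e \<in> E - A. e \<inter> restr_vertices A \<noteq> {}}"

definition degree :: "'a set set \<Rightarrow> 'a \<Rightarrow> nat" where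
  "degree E v = card {e \<in> E. v \<in> e}"

definition norm_laplacian :: "'a set \<Rightarrow> 'a set set \<Rightarrow> ('a \<Rightarrow> real) \<Rightarrow> 'a \<Rightarrow> real" where
  "norm_laplacian V E f v =
     f v - (1 / real (degree E v)) * (\<Sum>u\<in>{u \<in> V. {u, v} \<in> E}. f u)"

definition laplacian_eigenvalue :: "'a set \<Rightarrow> 'a set set \<Rightarrow> real \<Rightarrow> bool" where
  "laplacian_eigenvalue V E mu \<longleftrightarrow>
     (\<exists>f. (\<exists>v\<in>V. f v \<noteq> 0) \<and> (\<forall>v\<in>V. norm_laplacian V E f v = mu * f v))"

definition lambda_max :: "'a set \<Rightarrow> 'a set set \<Rightarrow> real" where
  "lambda_max V E = Max {mu. laplacian_eigenvalue V E mu}"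

end

theory Submission
  imports Defs "HOL-Analysis.Function_Topology"
begin

definition SR :: "'a set set \<Rightarrow> ('a \<times> 'a) set" where "SR A = {(u, v). {u, v} \<in> A}"
definition PP :: "'a set set \<Rightarrow> ('a \<Rightarrow> bool) \<Rightarrow> ('a \<times> 'a) set" where
  "PP A \<sigma> = {(u, v). {u, v} \<in> A \<and> \<sigma> u \<and> \<not> \<sigma> v}"
definition edges_in :: "'a set \<Rightarrow> 'a set set \<Rightarrow> bool" where
  "edges_in V A \<longleftrightarrow> (\<forall>e\<in>A. \<exists>u v. u \<noteq> v \<and> u \<in> V \<and> v \<in> V \<and> e = {u, v})"

lemma conn_rel_SR: "conn_rel V A = (SR A)\<^sup>* \<inter> (V \<times> V)"
  unfolding conn_rel_def SR_def by simp

lemma SR_sym: "(u, v) \<in> (SR A)\<^sup>* \<Longrightarrow> (v, u) \<in> (SR A)\<^sup>*"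
proof -
  have "sym (SR A)" unfolding SR_def sym_def by (auto simp: insert_commute)
  then have "sym ((SR A)\<^sup>*)" by (rule sym_rtrancl)
  then show "(u, v) \<in> (SR A)\<^sup>* \<Longrightarrow> (v, u) \<in> (SR A)\<^sup>*" by (meson symD)
qed

lemma equiv_conn: "equiv V (conn_rel V A)"
  unfolding conn_rel_SR equiv_def refl_on_def sym_def trans_def
  by (auto intro: SR_sym rtrancl_trans)

lemma PP_sub: "edges_in V A \<Longrightarrow> PP A \<sigma> \<subseteq> V \<times> V"
  unfolding PP_def edges_in_def by (fastforce simp: doubleton_eq_iff)

lemma PP_fin: "finite V \<Longrightarrow> edges_in V A \<Longrightarrow> finite (PP A \<sigma>)"
  using PP_sub finite_subset by (metis finite_SigmaI)

lemma SR_insert: "SR (insert {a, b} A) = SR A \<union> {(a, b), (b, a)}"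
  unfolding SR_def by (auto simp: doubleton_eq_iff)

lemma char_ins:
  assumes "(x, y) \<in> (SR A \<union> {(a, b), (b, a)})\<^sup>*"
  shows "(x, y) \<in> (SR A)\<^sup>* \<or> ((x, a) \<in> (SR A)\<^sup>* \<and> (b, y) \<in> (SR A)\<^sup>*)
         \<or> ((x, b) \<in> (SR A)\<^sup>* \<and> (a, y) \<in> (SR A)\<^sup>*)"
  using assms
proof (induction rule: rtrancl_induct)
  case base then show ?case by simp
next
  case (step y z)
  from step.hyps(2) show ?case
  proof
    assume "(y, z) \<in> SR A"
    then have yz: "(y, z) \<in> (SR A)\<^sup>*" by simp
    from step.IH show ?thesis using yz by (meson rtrancl_trans)
  next
    assume "(y, z) \<in> {(a, b), (b, a)}"
    then show ?thesis using step.IH by (auto intro: SR_sym rtrancl_trans)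
  qed
qed

lemma quot_card_base: "finite V \<Longrightarrow> num_components V {} = card V"
proof -
  assume "finite V"
  have "conn_rel V {} = Id_on V" unfolding conn_rel_def by auto
  then have "V // conn_rel V {} = (\<lambda>x. {x}) ` V" unfolding quotient_def by auto
  then show ?thesis unfolding num_components_def by (simp add: card_image)
qed

lemma nc_same:
  assumes "(a, b) \<in> (SR A)\<^sup>*"
  shows "num_components V (insert {a, b} A) = num_components V A"
proof -
  have "(SR (insert {a, b} A))\<^sup>* = (SR A)\<^sup>*"
    unfolding SR_insert
  proof (rule rtrancl_subset)
    show "SR A \<subseteq> SR A \<union> {(a, b), (b, a)}" by auto
    show "SR A \<union> {(a, b), (b, a)} \<subseteq> (SR A)\<^sup>*" using assms SR_sym by auto
  qed
  then show ?thesis unfolding num_components_def conn_rel_SR by simp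
qed

lemma nc_merge:
  assumes fin: "finite V" and ab: "a \<in> V" "b \<in> V"
  shows "num_components V A \<le> num_components V (insert {a, b} A) + 1"
proof -
  let ?R = "conn_rel V A" and ?R' = "conn_rel V (insert {a, b} A)"
  have eR: "equiv V ?R" and eR': "equiv V ?R'" by (rule equiv_conn)+
  have RR': "?R \<subseteq> ?R'" unfolding conn_rel_SR SR_insert using rtrancl_mono[of "SR A" "SR A \<union> {(a, b), (b, a)}"] by auto
  define g where "g X = ?R' `` X" for X
  have gx: "g (?R `` {x}) = ?R' `` {x}" if x: "x \<in> V" for x
  proof
    show "g (?R `` {x}) \<subseteq> ?R' `` {x}"
      unfolding g_def using RR' eR' unfolding equiv_def trans_def by blast
    show "?R' `` {x} \<subseteq> g (?R `` {x})"
      unfolding g_def using x eR unfolding equiv_def refl_on_def by blast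
  qed
  let ?Q = "V // ?R - {?R `` {b}}"
  have inj: "inj_on g ?Q"
  proof
    fix X Y assume X: "X \<in> ?Q" and Y: "Y \<in> ?Q" and gXY: "g X = g Y"
    obtain x where x: "x \<in> V" "X = ?R `` {x}" using X by (auto elim: quotientE)
    obtain y where y: "y \<in> V" "Y = ?R `` {y}" using Y by (auto elim: quotientE)
    have "?R' `` {x} = ?R' `` {y}" using gXY gx x y by simp
    then have xy': "(x, y) \<in> ?R'" using eR' x(1) y(1) by (simp add: eq_equiv_class_iff)
    then have "(x, y) \<in> (SR A \<union> {(a, b), (b, a)})\<^sup>*" unfolding conn_rel_SR SR_insert by simp
    from char_ins[OF this] show "X = Y"
    proof (elim disjE conjE)
      assume "(x, y) \<in> (SR A)\<^sup>*"
      then have "(x, y) \<in> ?R" using x y unfolding conn_rel_SR by simp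
      then show ?thesis using x y eR by (simp add: equiv_class_eq)
    next
      assume "(b, y) \<in> (SR A)\<^sup>*"
      then have "(b, y) \<in> ?R" using ab y unfolding conn_rel_SR by simp
      then have "Y = ?R `` {b}" using y eR by (simp add: equiv_class_eq)
      then show ?thesis using Y by simp
    next
      assume "(x, b) \<in> (SR A)\<^sup>*"
      then have "(x, b) \<in> ?R" using ab x unfolding conn_rel_SR by simp
      then have "X = ?R `` {b}" using x eR by (simp add: equiv_class_eq)
      then show ?thesis using X by simp
    qed
  qed
  have sub: "g ` ?Q \<subseteq> V // ?R'"
  proof
    fix Z assume "Z \<in> g ` ?Q"
    then obtain x where "x \<in> V" "Z = g (?R `` {x})" by (auto elim: quotientE)
    then show "Z \<in> V // ?R'" using gx by (simp add: quotientI)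
  qed
  have finQ': "finite (V // ?R')" using fin eR' by (simp add: finite_quotient equiv_type)
  have finQ: "finite (V // ?R)" using fin eR by (simp add: finite_quotient equiv_type)
  have "card (V // ?R) \<le> card ?Q + 1"
  proof (cases "?R `` {b} \<in> V // ?R")
    case True
    have c0: "card (V // ?R) > 0" using True finQ card_gt_0_iff[of "V // ?R"] by auto
    have "card ?Q = card (V // ?R) - 1" using True by (simp add: card_Diff_singleton)
    then show ?thesis using c0 by linarith
  next
    case False then show ?thesis by simp
  qed
  also have "card ?Q = card (g ` ?Q)" using inj by (simp add: card_image)
  also have "card (g ` ?Q) \<le> card (V // ?R')" using sub finQ' by (rule card_mono[rotated])
  finally show ?thesis unfolding num_components_def by simp
qed

lemma flip_count:
  assumes fin: "finite V" and ed: "edges_in V A"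
    and clos: "\<And>u v. {u, v} \<in> A \<Longrightarrow> (u \<in> C \<longleftrightarrow> v \<in> C)"
  shows "card (PP A \<sigma>) \<le> card (PP A (\<lambda>x. if x \<in> C then \<not> \<sigma> x else \<sigma> x))"
proof -
  define \<phi> where "\<phi> p = (if fst p \<in> C then (snd p, fst p) else p)" for p :: "'a \<times> 'a"
  have "inj_on \<phi> (PP A \<sigma>)"
  proof
    fix p q assume p: "p \<in> PP A \<sigma>" and q: "q \<in> PP A \<sigma>" and e: "\<phi> p = \<phi> q"
    obtain u v where p': "p = (u, v)" by (cases p)
    obtain u' v' where q': "q = (u', v')" by (cases q)
    have "{u, v} \<in> A" "{u', v'} \<in> A" using p q p' q' unfolding PP_def by auto
    then have "u \<in> C \<longleftrightarrow> v \<in> C" "u' \<in> C \<longleftrightarrow> v' \<in> C" using clos by auto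
    then show "p = q" using e p' q' unfolding \<phi>_def by (auto split: if_splits)
  qed
  moreover have "\<phi> ` PP A \<sigma> \<subseteq> PP A (\<lambda>x. if x \<in> C then \<not> \<sigma> x else \<sigma> x)"
  proof
    fix z assume "z \<in> \<phi> ` PP A \<sigma>"
    then obtain u v where uv: "(u, v) \<in> PP A \<sigma>" "z = \<phi> (u, v)" by auto
    have "{u, v} \<in> A" using uv unfolding PP_def by auto
    then have "u \<in> C \<longleftrightarrow> v \<in> C" using clos by auto
    then show "z \<in> PP A (\<lambda>x. if x \<in> C then \<not> \<sigma> x else \<sigma> x)"
      using uv unfolding \<phi>_def PP_def by (auto simp: insert_commute)
  qed
  moreover have "finite (PP A (\<lambda>x. if x \<in> C then \<not> \<sigma> x else \<sigma> x))" using PP_fin[OF fin ed] .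
  ultimately show ?thesis by (meson card_inj_on_le)
qed

lemma add_edge_count:
  assumes fin: "finite V" and ed: "edges_in V (insert {a, b} A)" and nA: "{a, b} \<notin> A"
    and ne: "\<tau> a \<noteq> \<tau> b"
  shows "card (PP A \<tau>) + 1 \<le> card (PP (insert {a, b} A) \<tau>)"
proof -
  have ed': "edges_in V A" using ed unfolding edges_in_def by auto
  obtain p where p: "p \<in> PP (insert {a, b} A) \<tau>" "p \<notin> PP A \<tau>"
  proof (cases "\<tau> a")
    case True
    then have "(a, b) \<in> PP (insert {a, b} A) \<tau>" "(a, b) \<notin> PP A \<tau>" using ne nA unfolding PP_def by auto
    then show ?thesis using that by blast
  next
    case False
    have ba: "{b, a} = {a, b}" by blast
    have "(b, a) \<in> PP (insert {a, b} A) \<tau>" using ne False ba unfolding PP_def by auto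
    moreover have "(b, a) \<notin> PP A \<tau>" using nA ba unfolding PP_def by auto
    ultimately show ?thesis using that by blast
  qed
  have "PP A \<tau> \<subseteq> PP (insert {a, b} A) \<tau> - {p}" using p unfolding PP_def by auto
  then have "card (PP A \<tau>) \<le> card (PP (insert {a, b} A) \<tau> - {p})"
    using PP_fin[OF fin ed] by (intro card_mono) auto
  also have "\<dots> = card (PP (insert {a, b} A) \<tau>) - 1" using p by simp
  finally have le: "card (PP A \<tau>) \<le> card (PP (insert {a, b} A) \<tau>) - 1" .
  have "card (PP (insert {a, b} A) \<tau>) > 0" using p PP_fin[OF fin ed] card_gt_0_iff[of "PP (insert {a, b} A) \<tau>"] by auto
  then show ?thesis using le by linarith
qed

lemma sigma_exists:
  assumes fin: "finite V" and finA: "finite A" and ed: "edges_in V A"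
  shows "\<exists>\<sigma>. card V \<le> card (PP A \<sigma>) + num_components V A"
  using finA ed
proof (induction A rule: finite_induct)
  case empty
  show ?case using quot_card_base[OF fin] by simp
next
  case (insert e A)
  then have edA: "edges_in V A" unfolding edges_in_def by auto
  obtain \<sigma> where \<sigma>: "card V \<le> card (PP A \<sigma>) + num_components V A" using insert.IH[OF edA] by blast
  obtain a b where ab: "a \<noteq> b" "a \<in> V" "b \<in> V" "e = {a, b}" using insert.prems unfolding edges_in_def by blast
  have PPmono: "card (PP A \<tau>) \<le> card (PP (insert e A) \<tau>)" for \<tau>
  proof (rule card_mono[OF PP_fin[OF fin insert.prems]])
    show "PP A \<tau> \<subseteq> PP (insert e A) \<tau>" unfolding PP_def by blast
  qed
  show ?case
  proof (cases "(a, b) \<in> (SR A)\<^sup>*")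
    case True
    have "num_components V (insert e A) = num_components V A" using nc_same[OF True] ab(4) by simp
    then have "card V \<le> card (PP (insert e A) \<sigma>) + num_components V (insert e A)"
      using \<sigma> PPmono[of \<sigma>] by linarith
    then show ?thesis by blast
  next
    case False
    define C where "C = conn_rel V A `` {a}"
    define \<tau> where "\<tau> = (if \<sigma> a = \<sigma> b then (\<lambda>x. if x \<in> C then \<not> \<sigma> x else \<sigma> x) else \<sigma>)"
    have Cdef: "x \<in> C \<longleftrightarrow> x \<in> V \<and> (a, x) \<in> (SR A)\<^sup>*" for x
      unfolding C_def conn_rel_SR using ab(2) by auto
    have aC: "a \<in> C" using Cdef ab(2) by simp
    have bC: "b \<notin> C" using Cdef False by simp
    have clos: "u \<in> C \<longleftrightarrow> v \<in> C" if uvA: "{u, v} \<in> A" for u v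
    proof -
      have uv: "(u, v) \<in> SR A" "(v, u) \<in> SR A" using uvA unfolding SR_def by (auto simp: insert_commute)
      obtain x y where "x \<noteq> y" "x \<in> V" "y \<in> V" "{u, v} = {x, y}" using edA uvA unfolding edges_in_def by blast
      then have V: "u \<in> V" "v \<in> V" by (auto simp: doubleton_eq_iff)
      have "(a, u) \<in> (SR A)\<^sup>* \<longleftrightarrow> (a, v) \<in> (SR A)\<^sup>*"
        using uv rtrancl_into_rtrancl[of a u "SR A" v] rtrancl_into_rtrancl[of a v "SR A" u] by blast
      then show ?thesis using Cdef V by blast
    qed
    have t1: "card (PP A \<sigma>) \<le> card (PP A \<tau>)"
    proof (cases "\<sigma> a = \<sigma> b")
      case True
      then have "\<tau> = (\<lambda>x. if x \<in> C then \<not> \<sigma> x else \<sigma> x)" unfolding \<tau>_def by simp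
      then show ?thesis using flip_count[OF fin edA clos] by simp
    next
      case False
      then show ?thesis unfolding \<tau>_def by simp
    qed
    have t2: "\<tau> a \<noteq> \<tau> b" unfolding \<tau>_def using aC bC by auto
    have edI: "edges_in V (insert {a, b} A)" using insert.prems ab(4) by simp
    have nA: "{a, b} \<notin> A" using insert.hyps ab(4) by simp
    have t3: "card (PP A \<tau>) + 1 \<le> card (PP (insert e A) \<tau>)"
      using add_edge_count[OF fin edI nA t2] ab(4) by simp
    have "num_components V A \<le> num_components V (insert e A) + 1"
      using nc_merge[OF fin ab(2,3)] ab(4) by simp
    then have "card V \<le> card (PP (insert e A) \<tau>) + num_components V (insert e A)"
      using \<sigma> t1 t3 by linarith
    then show ?thesis by blast
  qed
qed



lemma indep_card:
  fixes \<phi> :: "'i \<Rightarrow> 'a \<Rightarrow> real"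
  assumes "finite V" "finite I"
    and "\<And>c. (\<forall>x\<in>V. (\<Sum>i\<in>I. c i * \<phi> i x) = 0) \<Longrightarrow> (\<forall>i\<in>I. c i = 0)"
  shows "card I \<le> card V"
  using assms
proof (induction V arbitrary: I \<phi> rule: finite_induct)
  case empty
  have "\<forall>i\<in>I. (1::real) = 0" using empty.prems(2)[of "\<lambda>_. 1"] by simp
  then have "I = {}" by auto
  then show ?case by simp
next
  case (insert x V)
  show ?case
  proof (cases "\<forall>i\<in>I. \<phi> i x = 0")
    case True
    have "card I \<le> card V"
    proof (rule insert.IH[OF insert.prems(1)])
      fix c assume h: "\<forall>y\<in>V. (\<Sum>i\<in>I. c i * \<phi> i y) = 0"
      have "\<forall>y\<in>insert x V. (\<Sum>i\<in>I. c i * \<phi> i y) = 0" using h True by simp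
      then show "\<forall>i\<in>I. c i = 0" using insert.prems(2) by blast
    qed
    then show ?thesis using insert.hyps by simp
  next
    case False
    then obtain i0 where i0: "i0 \<in> I" "\<phi> i0 x \<noteq> 0" by blast
    define \<psi> where "\<psi> i y = \<phi> i y - (\<phi> i x / \<phi> i0 x) * \<phi> i0 y" for i y
    have "card (I - {i0}) \<le> card V"
    proof (rule insert.IH)
      show "finite (I - {i0})" using insert.prems(1) by simp
      fix c assume h: "\<forall>y\<in>V. (\<Sum>i\<in>I - {i0}. c i * \<psi> i y) = 0"
      define c' where "c' i = (if i = i0 then - (\<Sum>j\<in>I - {i0}. c j * \<phi> j x / \<phi> i0 x) else c i)" for i
      have key: "(\<Sum>i\<in>I. c' i * \<phi> i y) = (\<Sum>i\<in>I - {i0}. c i * \<psi> i y)" for y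
      proof -
        have "(\<Sum>i\<in>I. c' i * \<phi> i y) = c' i0 * \<phi> i0 y + (\<Sum>i\<in>I - {i0}. c' i * \<phi> i y)"
          using i0(1) insert.prems(1) by (simp add: sum.remove)
        also have "(\<Sum>i\<in>I - {i0}. c' i * \<phi> i y) = (\<Sum>i\<in>I - {i0}. c i * \<phi> i y)"
          unfolding c'_def by (intro sum.cong) auto
        also have "c' i0 * \<phi> i0 y = - (\<Sum>j\<in>I - {i0}. c j * (\<phi> j x / \<phi> i0 x) * \<phi> i0 y)"
          unfolding c'_def by (simp add: sum_distrib_right)
        finally show ?thesis unfolding \<psi>_def
          by (simp add: right_diff_distrib sum_subtractf algebra_simps)
      qed
      have "\<forall>y\<in>insert x V. (\<Sum>i\<in>I. c' i * \<phi> i y) = 0"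
      proof
        fix y assume "y \<in> insert x V"
        then show "(\<Sum>i\<in>I. c' i * \<phi> i y) = 0"
        proof
          assume "y = x"
          have "\<psi> i x = 0" for i unfolding \<psi>_def using i0(2) by simp
          then show ?thesis using key[of y] \<open>y = x\<close> by simp
        next
          assume "y \<in> V" then show ?thesis using key[of y] h by simp
        qed
      qed
      then have "\<forall>i\<in>I. c' i = 0" using insert.prems(2) by blast
      then show "\<forall>i\<in>I - {i0}. c i = 0" unfolding c'_def by (metis DiffE insertI1)
    qed
    moreover have "card I = card (I - {i0}) + 1"
      using i0(1) insert.prems(1) card_Diff1_less[of I i0] by (simp add: card_Diff_singleton)
    ultimately show ?thesis using insert.hyps by simp
  qed
qed


locale gr =
  fixes W :: "'a set" and F :: "'a set set"
  assumes sg: "simple_graph W F" and ni: "no_isolated W F"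
begin

definition dg :: "'a \<Rightarrow> real" where "dg v = real (degree F v)"
definition Nf :: "('a \<Rightarrow> real) \<Rightarrow> real" where "Nf f = (\<Sum>v\<in>W. dg v * (f v)^2)"
definition ip :: "('a \<Rightarrow> real) \<Rightarrow> ('a \<Rightarrow> real) \<Rightarrow> real" where
  "ip f g = (\<Sum>v\<in>W. dg v * f v * g v)"
definition SS :: "('a \<Rightarrow> real) \<Rightarrow> ('a \<Rightarrow> real) \<Rightarrow> real" where
  "SS f g = (\<Sum>v\<in>W. \<Sum>u\<in>W. (if {u,v} \<in> F then f u * g v else 0))"
definition qq :: "('a \<Rightarrow> real) \<Rightarrow> real" where "qq f = Nf f - SS f f"

lemma finW: "finite W" using sg by (simp add: simple_graph_def)

lemma finF: "finite F"
proof -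
  have "F \<subseteq> Pow W" using sg unfolding simple_graph_def by fastforce
  then show ?thesis using finW finite_subset by blast
qed

lemma dg_pos: "v \<in> W \<Longrightarrow> dg v \<ge> 1"
proof -
  assume v: "v \<in> W"
  then obtain e where e: "e \<in> F" "v \<in> e" using ni unfolding no_isolated_def by blast
  have "{e \<in> F. v \<in> e} \<noteq> {}" using e by blast
  moreover have "finite {e \<in> F. v \<in> e}" using finF by simp
  ultimately have "card {e \<in> F. v \<in> e} \<ge> 1"
    by (simp add: Suc_leI card_gt_0_iff)
  then show ?thesis unfolding dg_def degree_def by simp
qed

lemma dg_nonneg: "dg v \<ge> 0" unfolding dg_def by simp

lemma SS_sym: "SS f g = SS g f"
proof -
  have "SS g f = (\<Sum>u\<in>W. \<Sum>v\<in>W. (if {u,v} \<in> F then g u * f v else 0))"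
    unfolding SS_def by (rule sum.swap)
  also have "\<dots> = SS f g" unfolding SS_def
    by (intro sum.cong refl) (auto simp: insert_commute mult.commute)
  finally show ?thesis by simp
qed

lemma nb_sum: "v \<in> W \<Longrightarrow> (\<Sum>u\<in>{u \<in> W. {u, v} \<in> F}. f u) = (\<Sum>u\<in>W. if {u,v} \<in> F then f u else 0)"
  using finW by (simp add: sum.inter_filter)

lemma lap_eq: "v \<in> W \<Longrightarrow> dg v * norm_laplacian W F f v = dg v * f v - (\<Sum>u\<in>W. if {u,v} \<in> F then f u else 0)"
proof -
  assume v: "v \<in> W"
  have d: "dg v \<noteq> 0" using dg_pos[OF v] by simp
  have "norm_laplacian W F f v = f v - (1 / dg v) * (\<Sum>u\<in>W. if {u,v} \<in> F then f u else 0)"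
    unfolding norm_laplacian_def dg_def[symmetric] nb_sum[OF v, of f] ..
  then show ?thesis using d by (simp add: right_diff_distrib)
qed

lemma bil: "(\<Sum>v\<in>W. dg v * g v * norm_laplacian W F f v) = ip f g - SS f g"
proof -
  have "(\<Sum>v\<in>W. dg v * g v * norm_laplacian W F f v)
      = (\<Sum>v\<in>W. g v * (dg v * f v - (\<Sum>u\<in>W. if {u,v} \<in> F then f u else 0)))"
  proof (intro sum.cong refl)
    fix v assume v: "v \<in> W"
    have "dg v * g v * norm_laplacian W F f v = g v * (dg v * norm_laplacian W F f v)" by simp
    then show "dg v * g v * norm_laplacian W F f v = g v * (dg v * f v - (\<Sum>u\<in>W. if {u,v} \<in> F then f u else 0))"
      using lap_eq[OF v, of f] by simp
  qed
  also have "\<dots> = (\<Sum>v\<in>W. dg v * f v * g v) - (\<Sum>v\<in>W. \<Sum>u\<in>W. g v * (if {u,v} \<in> F then f u else 0))"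
    by (simp add: right_diff_distrib sum_subtractf sum_distrib_left mult_ac)
  also have "\<dots> = ip f g - SS f g"
    unfolding ip_def SS_def by (intro arg_cong2[where f="(-)"] refl sum.cong) auto

  finally show ?thesis .
qed

lemma ip_self: "ip f f = Nf f"
  unfolding ip_def Nf_def by (simp add: power2_eq_square mult_ac)

lemma ip_sym: "ip f g = ip g f"
  unfolding ip_def by (simp add: mult_ac)

lemma Nf_pos: "v \<in> W \<Longrightarrow> f v \<noteq> 0 \<Longrightarrow> Nf f > 0"
  unfolding Nf_def
  by (rule sum_pos2[OF finW, of v]) (auto intro!: mult_nonneg_nonneg dg_nonneg simp: dg_pos order_less_le_trans[OF zero_less_one])

lemma Nf_zero: "Nf f = 0 \<Longrightarrow> v \<in> W \<Longrightarrow> f v = 0"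
  using Nf_pos[of v f] by auto

lemma eig_bil: "(\<forall>v\<in>W. norm_laplacian W F f v = \<nu> * f v) \<Longrightarrow> ip f g - SS f g = \<nu> * ip f g"
proof -
  assume e: "\<forall>v\<in>W. norm_laplacian W F f v = \<nu> * f v"
  have "ip f g - SS f g = (\<Sum>v\<in>W. dg v * g v * norm_laplacian W F f v)" by (simp add: bil)
  also have "\<dots> = (\<Sum>v\<in>W. \<nu> * (dg v * f v * g v))" using e by (intro sum.cong) auto
  also have "\<dots> = \<nu> * ip f g" unfolding ip_def by (simp add: sum_distrib_left)
  finally show ?thesis .
qed

lemma eig_ray: "(\<forall>v\<in>W. norm_laplacian W F f v = \<nu> * f v) \<Longrightarrow> qq f = \<nu> * Nf f"
  using eig_bil[of f \<nu> f] by (simp add: qq_def ip_self)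

lemma eig_orth:
  assumes "\<forall>v\<in>W. norm_laplacian W F f v = \<nu> * f v" "\<forall>v\<in>W. norm_laplacian W F g v = \<mu> * g v" "\<nu> \<noteq> \<mu>"
  shows "ip f g = 0"
proof -
  have "\<nu> * ip f g = \<mu> * ip f g"
    using eig_bil[OF assms(1), of g] eig_bil[OF assms(2), of f] by (simp add: ip_sym SS_sym)
  then show ?thesis using assms(3) by simp
qed

lemma eig_finite: "finite {mu. laplacian_eigenvalue W F mu}"
proof (rule ccontr)
  let ?E = "{mu. laplacian_eigenvalue W F mu}"
  assume "infinite ?E"
  then obtain I where I: "finite I" "card I = card W + 1" "I \<subseteq> ?E"
    using infinite_arbitrarily_large by blast
  define \<phi> where "\<phi> mu = (SOME f. (\<exists>v\<in>W. f v \<noteq> 0) \<and> (\<forall>v\<in>W. norm_laplacian W F f v = mu * f v))" for mu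
  have \<phi>: "(\<exists>v\<in>W. \<phi> mu v \<noteq> 0) \<and> (\<forall>v\<in>W. norm_laplacian W F (\<phi> mu) v = mu * \<phi> mu v)" if "mu \<in> I" for mu
  proof -
    have "laplacian_eigenvalue W F mu" using that I(3) by blast
    then show ?thesis unfolding laplacian_eigenvalue_def \<phi>_def by (rule someI_ex)
  qed
  have "card I \<le> card W"
  proof (rule indep_card[OF finW I(1), of \<phi>])
    fix c assume h: "\<forall>x\<in>W. (\<Sum>i\<in>I. c i * \<phi> i x) = 0"
    show "\<forall>i\<in>I. c i = 0"
    proof
      fix j assume j: "j \<in> I"
      have "0 = (\<Sum>x\<in>W. dg x * (\<Sum>i\<in>I. c i * \<phi> i x) * \<phi> j x)" using h by simp
      also have "\<dots> = (\<Sum>i\<in>I. c i * ip (\<phi> i) (\<phi> j))"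
        unfolding ip_def by (simp add: sum_distrib_left sum_distrib_right mult_ac sum.swap[of _ W])
      also have "\<dots> = c j * ip (\<phi> j) (\<phi> j) + (\<Sum>i\<in>I - {j}. c i * ip (\<phi> i) (\<phi> j))"
        using j I(1) by (simp add: sum.remove)
      also have "(\<Sum>i\<in>I - {j}. c i * ip (\<phi> i) (\<phi> j)) = 0"
        using \<phi> j eig_orth by (intro sum.neutral) (metis DiffE insertI1 mult_zero_right)
      finally have "c j * Nf (\<phi> j) = 0" by (simp add: ip_self)
      moreover have "Nf (\<phi> j) > 0" using \<phi>[OF j] Nf_pos by blast
      ultimately show "c j = 0" by simp
    qed
  qed
  then show False using I(2) by simp
qed

lemma SS_alt: "SS f g = (\<Sum>v\<in>W. \<Sum>u\<in>W. (if {u,v} \<in> F then 1 else 0) * (f u * g v))"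
  unfolding SS_def by (intro sum.cong refl) simp

lemma Nf_nonneg: "Nf f \<ge> 0"
  unfolding Nf_def by (intro sum_nonneg mult_nonneg_nonneg dg_nonneg) simp

lemma Nf_cong: "(\<And>v. v \<in> W \<Longrightarrow> f v = g v) \<Longrightarrow> Nf f = Nf g"
  unfolding Nf_def by (intro sum.cong) auto

lemma SS_cong: "(\<And>v. v \<in> W \<Longrightarrow> f v = g v) \<Longrightarrow> SS f f = SS g g"
  unfolding SS_def by (intro sum.cong refl) auto

lemma qq_cong: "(\<And>v. v \<in> W \<Longrightarrow> f v = g v) \<Longrightarrow> qq f = qq g"
  unfolding qq_def using Nf_cong SS_cong by metis

lemma Nf_scale: "Nf (\<lambda>v. c * h v) = c^2 * Nf h"
  unfolding Nf_def by (simp add: sum_distrib_left power_mult_distrib mult_ac)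

lemma SS_scale: "SS (\<lambda>v. c * h v) (\<lambda>v. c * h v) = c^2 * SS h h"
  unfolding SS_alt by (simp add: sum_distrib_left power2_eq_square mult_ac)

lemma qq_scale: "qq (\<lambda>v. c * h v) = c^2 * qq h"
  unfolding qq_def Nf_scale SS_scale by (simp add: right_diff_distrib)

lemma Nf_add: "Nf (\<lambda>x. f x + t * g x) = Nf f + 2 * t * ip f g + t^2 * Nf g"
  unfolding Nf_def ip_def
  by (simp add: sum.distrib sum_distrib_left power2_eq_square algebra_simps)

lemma SS_add: "SS (\<lambda>x. f x + t * g x) (\<lambda>x. f x + t * g x) = SS f f + t * SS f g + t * SS g f + t^2 * SS g g"
  unfolding SS_alt
  by (simp add: sum.distrib sum_distrib_left power2_eq_square algebra_simps)

lemma qq_add: "qq (\<lambda>x. f x + t * g x) = qq f + 2 * t * (ip f g - SS f g) + t^2 * qq g"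
  unfolding qq_def Nf_add SS_add using SS_sym[of g f] by (simp add: algebra_simps)

lemma cont_Nf: "continuous_map (product_topology (\<lambda>_. euclideanreal) W) euclideanreal Nf"
proof -
  have "continuous_map (product_topology (\<lambda>_. euclideanreal) W) euclideanreal (\<lambda>f. \<Sum>v\<in>W. dg v * (f v)^2)"
    by (intro continuous_map_sum finW continuous_map_real_mult continuous_map_real_pow
        continuous_map_canonical_const continuous_map_product_projection[where X="\<lambda>_. euclideanreal", simplified])
  then show ?thesis unfolding Nf_def[abs_def] .
qed

lemma cont_qq: "continuous_map (product_topology (\<lambda>_. euclideanreal) W) euclideanreal qq"
proof -
  have "continuous_map (product_topology (\<lambda>_. euclideanreal) W) euclideanreal
     (\<lambda>f. Nf f - (\<Sum>v\<in>W. \<Sum>u\<in>W. (if {u,v} \<in> F then 1 else 0) * (f u * f v)))"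
    by (intro continuous_map_diff cont_Nf continuous_map_sum finW continuous_map_real_mult
        continuous_map_canonical_const continuous_map_product_projection[where X="\<lambda>_. euclideanreal", simplified])
  then show ?thesis unfolding qq_def[abs_def] SS_alt .
qed

lemma real_lin_quad: fixes B a :: real
  assumes "\<And>t. 2 * t * B + t^2 * a \<le> 0" shows "B = 0"
proof -
  define k where "k = \<bar>a\<bar> + 1"
  have k: "k > 0" unfolding k_def by simp
  have "2 * (B / k) * B + (B / k)^2 * a \<le> 0" by (rule assms)
  then have "(2 * (B / k) * B + (B / k)^2 * a) * k^2 \<le> 0"
    by (simp add: mult_nonpos_nonneg)
  also have "(2 * (B / k) * B + (B / k)^2 * a) * k^2 = B^2 * (2 * k + a)"
    using k by (simp add: field_simps power2_eq_square)
  finally have "B^2 * (2 * k + a) \<le> 0" .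
  moreover have "2 * k + a > 0" unfolding k_def by (simp add: abs_if)
  ultimately have "B^2 \<le> 0" by (simp add: mult_le_0_iff)
  then show ?thesis by simp
qed

lemma var_max:
  assumes "W \<noteq> {}"
  shows "\<exists>f0. Nf f0 = 1 \<and> (\<forall>h. qq h \<le> qq f0 * Nf h)"
proof -
  let ?T = "product_topology (\<lambda>_::'a. euclideanreal) W"
  define K where "K = {x \<in> topspace ?T. Nf x \<in> {1}}"
  have Ksub: "K \<subseteq> PiE W (\<lambda>_. {-1..1})"
  proof
    fix x assume x: "x \<in> K"
    then have x1: "x \<in> PiE W (\<lambda>_. UNIV)" and n: "Nf x = 1" unfolding K_def by auto
    have "x v \<in> {-1..1}" if v: "v \<in> W" for v
    proof -
      have "dg v * (x v)^2 \<le> Nf x" unfolding Nf_def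
        by (rule member_le_sum[OF v _ finW]) (intro mult_nonneg_nonneg dg_nonneg, simp)
      then have "(x v)^2 \<le> 1" using dg_pos[OF v] n
        by (smt (verit) mult_le_cancel_right1 zero_le_power2)
      then show ?thesis using abs_square_le_1[of "x v"] by auto
    qed
    then show "x \<in> PiE W (\<lambda>_. {-1..1})" using x1 by (auto simp: PiE_iff)
  qed
  have cK: "compactin ?T K"
  proof (rule closed_compactin[OF _ Ksub])
    show "compactin ?T (PiE W (\<lambda>_. {-1..1}))" by (simp add: compactin_PiE)
    show "closedin ?T K" unfolding K_def
      by (rule closedin_continuous_map_preimage[OF cont_Nf]) simp
  qed
  obtain v0 where v0: "v0 \<in> W" using assms by blast
  define e where "e = restrict (\<lambda>v. if v = v0 then 1 / sqrt (dg v0) else 0) W"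
  have "Nf e = Nf (\<lambda>v. if v = v0 then 1 / sqrt (dg v0) else 0)"
    unfolding e_def by (rule Nf_cong) simp
  also have "\<dots> = (\<Sum>v\<in>W. if v = v0 then dg v0 * (1 / sqrt (dg v0))^2 else 0)"
    unfolding Nf_def by (intro sum.cong) auto
  also have "\<dots> = dg v0 * (1 / sqrt (dg v0))^2"
    using v0 finW by simp
  also have "\<dots> = 1" using dg_pos[OF v0] by (simp add: power_divide)
  finally have "e \<in> K" unfolding K_def e_def by auto
  have "compact (qq ` K)"
    using image_compactin[OF cK cont_qq] by simp
  then obtain m where m: "m \<in> qq ` K" "\<forall>t\<in>qq ` K. t \<le> m"
    using compact_attains_sup[of "qq ` K"] \<open>e \<in> K\<close> by blast
  then obtain f0 where f0: "f0 \<in> K" "qq f0 = m" by blast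
  have nf0: "Nf f0 = 1" using f0 unfolding K_def by auto
  have "qq h \<le> qq f0 * Nf h" for h
  proof (cases "Nf h = 0")
    case True
    then have "qq h = qq (\<lambda>_. 0)" using Nf_zero by (intro qq_cong) auto
    also have "\<dots> = 0" unfolding qq_def Nf_def SS_def by (simp cong: if_cong)
    finally show ?thesis using True by simp
  next
    case False
    then have pos: "Nf h > 0" using Nf_nonneg[of h] by simp
    define s where "s = sqrt (Nf h)"
    have s: "s > 0" "s^2 = Nf h" using pos unfolding s_def by auto
    define h' where "h' = restrict (\<lambda>v. (1 / s) * h v) W"
    have "Nf h' = Nf (\<lambda>v. (1 / s) * h v)" unfolding h'_def by (rule Nf_cong) simp
    also have "\<dots> = (1 / s)^2 * Nf h" by (rule Nf_scale)
    also have "\<dots> = 1" using s pos by (simp add: power_divide)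
    finally have "h' \<in> K" unfolding K_def h'_def by auto
    then have "qq h' \<le> m" using m by blast
    moreover have "qq h' = qq (\<lambda>v. (1 / s) * h v)" unfolding h'_def by (rule qq_cong) simp
    moreover have "\<dots> = (1 / s)^2 * qq h" by (rule qq_scale)
    moreover have "\<dots> = qq h / Nf h" using s pos by (simp add: power_divide)
    ultimately have "qq h / Nf h \<le> qq f0" using f0 by simp
    then show ?thesis using pos by (simp add: divide_le_eq)
  qed
  then show ?thesis using nf0 by blast
qed

lemma eig_from_max:
  assumes n: "Nf f0 = 1" and h: "\<forall>h. qq h \<le> qq f0 * Nf h"
  shows "\<forall>v\<in>W. norm_laplacian W F f0 v = qq f0 * f0 v"
proof
  fix v0 assume v0: "v0 \<in> W"
  let ?\<mu> = "qq f0"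
  define g where "g x = (if x = v0 then 1 else (0::real))" for x
  have "2 * t * (ip f0 g - SS f0 g - ?\<mu> * ip f0 g) + t^2 * (qq g - ?\<mu> * Nf g) \<le> 0" for t
  proof -
    have "qq (\<lambda>x. f0 x + t * g x) \<le> ?\<mu> * Nf (\<lambda>x. f0 x + t * g x)" using h by blast
    then show ?thesis unfolding qq_add Nf_add n by (simp add: algebra_simps)
  qed
  then have B: "ip f0 g - SS f0 g = ?\<mu> * ip f0 g" using real_lin_quad by fastforce
  have ipg: "ip f0 g = dg v0 * f0 v0"
    unfolding ip_def g_def using v0 finW by (simp add: if_distrib sum.delta cong: if_cong)
  have "SS f0 g = (\<Sum>v\<in>W. if v = v0 then (\<Sum>u\<in>W. if {u,v0} \<in> F then f0 u else 0) else 0)"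
    unfolding SS_def g_def by (intro sum.cong refl) (auto cong: if_cong)
  also have "\<dots> = (\<Sum>u\<in>W. if {u,v0} \<in> F then f0 u else 0)"
    using v0 finW by (simp add: sum.delta)
  finally have "dg v0 * norm_laplacian W F f0 v0 = ip f0 g - SS f0 g"
    using lap_eq[OF v0, of f0] ipg by simp
  also have "\<dots> = dg v0 * (?\<mu> * f0 v0)" using B ipg by simp
  finally show "norm_laplacian W F f0 v0 = ?\<mu> * f0 v0" using dg_pos[OF v0] by simp
qed

lemma lam_ge:
  assumes "Nf f > 0"
  shows "lambda_max W F \<ge> qq f / Nf f"
proof -
  have "W \<noteq> {}" using assms unfolding Nf_def by auto
  then obtain f0 where f0: "Nf f0 = 1" "\<forall>h. qq h \<le> qq f0 * Nf h" using var_max by blast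
  have eig: "\<forall>v\<in>W. norm_laplacian W F f0 v = qq f0 * f0 v" using eig_from_max[OF f0] .
  have "\<exists>v\<in>W. f0 v \<noteq> 0"
  proof (rule ccontr)
    assume "\<not> ?thesis"
    then have "Nf f0 = 0" unfolding Nf_def by simp
    then show False using f0 by simp
  qed
  then have le: "laplacian_eigenvalue W F (qq f0)" unfolding laplacian_eigenvalue_def using eig by blast
  have "\<forall>\<nu>\<in>{mu. laplacian_eigenvalue W F mu}. \<nu> \<le> qq f0"
  proof
    fix \<nu> assume "\<nu> \<in> {mu. laplacian_eigenvalue W F mu}"
    then obtain \<phi> where \<phi>: "\<exists>v\<in>W. \<phi> v \<noteq> 0" "\<forall>v\<in>W. norm_laplacian W F \<phi> v = \<nu> * \<phi> v"
      unfolding laplacian_eigenvalue_def by blast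
    have "\<nu> * Nf \<phi> \<le> qq f0 * Nf \<phi>" using eig_ray[OF \<phi>(2)] f0(2) by metis
    moreover have "Nf \<phi> > 0" using \<phi>(1) Nf_pos by blast
    ultimately show "\<nu> \<le> qq f0" by simp
  qed
  then have "lambda_max W F = qq f0"
    unfolding lambda_max_def using le eig_finite by (intro Max_eqI) auto
  moreover have "qq f / Nf f \<le> qq f0" using f0(2) assms by (simp add: divide_le_eq)
  ultimately show ?thesis by simp
qed

lemma edgeD: "e \<in> F \<Longrightarrow> \<exists>a b. a \<noteq> b \<and> a \<in> W \<and> b \<in> W \<and> e = {a, b}"
  using sg unfolding simple_graph_def by blast

lemma edge_in: "{u, v} \<in> F \<Longrightarrow> u \<in> W \<and> v \<in> W \<and> u \<noteq> v"
proof -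
  assume "{u, v} \<in> F"
  then obtain a b where "a \<noteq> b" "a \<in> W" "b \<in> W" "{u, v} = {a, b}" using edgeD by blast
  then show ?thesis by (auto simp: doubleton_eq_iff)
qed

lemma deg_nb: "card {u \<in> W. {u, v} \<in> F} = degree F v"
proof -
  have eq: "{e \<in> F. v \<in> e} = (\<lambda>u. {u, v}) ` {u \<in> W. {u, v} \<in> F}"
  proof
    show "{e \<in> F. v \<in> e} \<subseteq> (\<lambda>u. {u, v}) ` {u \<in> W. {u, v} \<in> F}"
    proof
      fix e assume e: "e \<in> {e \<in> F. v \<in> e}"
      then obtain a b where ab: "a \<noteq> b" "a \<in> W" "b \<in> W" "e = {a, b}" using edgeD by blast
      show "e \<in> (\<lambda>u. {u, v}) ` {u \<in> W. {u, v} \<in> F}"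
      proof (cases "v = a")
        case True then show ?thesis using ab e by (auto simp: image_iff insert_commute intro!: bexI[of _ b])
      next
        case False then have "v = b" using ab e by auto
        then show ?thesis using ab e by (auto simp: image_iff intro!: bexI[of _ a])
      qed
    qed
  qed auto
  have "inj_on (\<lambda>u. {u, v}) {u \<in> W. {u, v} \<in> F}"
  proof
    fix x y assume x: "x \<in> {u \<in> W. {u, v} \<in> F}" and y: "y \<in> {u \<in> W. {u, v} \<in> F}" and "{x, v} = {y, v}"
    then show "x = y" using edge_in[of x v] by (auto simp: doubleton_eq_iff)
  qed
  then show ?thesis unfolding degree_def eq by (simp add: card_image)
qed

lemma sum_adj: "(\<Sum>u\<in>W. (if {u,v} \<in> F then 1 else 0) :: real) = dg v"
proof -
  have "(\<Sum>u\<in>W. (if {u,v} \<in> F then 1 else 0) :: real) = real (card {u \<in> W. {u, v} \<in> F})"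
    using finW by (simp add: sum.If_cases Int_def)
  then show ?thesis by (simp add: deg_nb dg_def)
qed

lemma qq_pairs: "2 * qq f = (\<Sum>v\<in>W. \<Sum>u\<in>W. (if {u,v} \<in> F then 1 else 0) * (f u - f v)^2)"
proof -
  let ?a = "\<lambda>u v. (if {u,v} \<in> F then 1 else 0) :: real"
  have X1: "(\<Sum>v\<in>W. \<Sum>u\<in>W. ?a u v * (f v)^2) = Nf f"
  proof -
    have "(\<Sum>v\<in>W. \<Sum>u\<in>W. ?a u v * (f v)^2) = (\<Sum>v\<in>W. (f v)^2 * (\<Sum>u\<in>W. ?a u v))"
      by (simp add: sum_distrib_left mult_ac)
    also have "\<dots> = Nf f" unfolding Nf_def sum_adj by (simp add: mult_ac)
    finally show ?thesis .
  qed
  have X2: "(\<Sum>v\<in>W. \<Sum>u\<in>W. ?a u v * (f u)^2) = Nf f"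
  proof -
    have "(\<Sum>v\<in>W. \<Sum>u\<in>W. ?a u v * (f u)^2) = (\<Sum>u\<in>W. \<Sum>v\<in>W. ?a u v * (f u)^2)"
      by (rule sum.swap)
    also have "\<dots> = (\<Sum>u\<in>W. \<Sum>v\<in>W. ?a v u * (f u)^2)"
      by (simp add: insert_commute)
    finally show ?thesis using X1 by simp
  qed
  have "(\<Sum>v\<in>W. \<Sum>u\<in>W. ?a u v * (f u - f v)^2)
      = (\<Sum>v\<in>W. \<Sum>u\<in>W. ?a u v * (f u)^2) + (\<Sum>v\<in>W. \<Sum>u\<in>W. ?a u v * (f v)^2) - 2 * SS f f"
    unfolding SS_alt by (simp add: power2_diff sum.distrib sum_subtractf sum_distrib_left algebra_simps)
  then show ?thesis using X1 X2 by (simp add: qq_def)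
qed

lemma test:
  fixes \<sigma> :: "'a \<Rightarrow> bool" and k :: nat
  assumes AF: "A \<subseteq> F" and Ane: "A \<noteq> {}"
    and k: "k \<le> card {(u, v). {u, v} \<in> A \<and> \<sigma> u \<and> \<not> \<sigma> v}"
  shows "lambda_max W F \<ge> 2 * real k / real (card A + card (boundary F A))"
proof -
  let ?a = "\<lambda>u v. (if {u,v} \<in> F then 1 else 0) :: real"
  define U where "U = \<Union>A"
  define f where "f v = (if v \<in> U then (if \<sigma> v then 1 else -1) else (0::real))" for v
  define P where "P = {(u, v). {u, v} \<in> A \<and> \<sigma> u \<and> \<not> \<sigma> v}"
  define P' where "P' = {(u, v). {u, v} \<in> A \<and> \<not> \<sigma> u \<and> \<sigma> v}"
  have UW: "U \<subseteq> W"
  proof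
    fix x assume "x \<in> U"
    then obtain e where "e \<in> A" "x \<in> e" unfolding U_def by blast
    then obtain a b where "a \<in> W" "b \<in> W" "e = {a, b}" using AF edgeD by blast
    then show "x \<in> W" using \<open>x \<in> e\<close> by auto
  qed
  have PW: "P \<subseteq> W \<times> W" "P' \<subseteq> W \<times> W" unfolding P_def P'_def using AF edge_in by auto
  have finP: "finite P" "finite P'" using PW finW finite_subset by blast+
  have P'eq: "P' = prod.swap ` P" unfolding P_def P'_def by (auto simp: image_iff insert_commute)
  have cardP': "card P' = card P" unfolding P'eq by (simp add: card_image)
  have disj: "P \<inter> P' = {}" unfolding P_def P'_def by auto
  have "2 * qq f = (\<Sum>u\<in>W. \<Sum>v\<in>W. ?a u v * (f u - f v)^2)"
    unfolding qq_pairs by (rule sum.swap)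
  also have "\<dots> = (\<Sum>p\<in>W \<times> W. ?a (fst p) (snd p) * (f (fst p) - f (snd p))^2)"
    by (simp add: sum.cartesian_product case_prod_beta)
  also have "\<dots> \<ge> (\<Sum>p\<in>P \<union> P'. ?a (fst p) (snd p) * (f (fst p) - f (snd p))^2)"
    using PW finW by (intro sum_mono2) auto
  also have "(\<Sum>p\<in>P \<union> P'. ?a (fst p) (snd p) * (f (fst p) - f (snd p))^2) = (\<Sum>p\<in>P \<union> P'. 4)"
  proof (intro sum.cong refl)
    fix p assume p: "p \<in> P \<union> P'"
    obtain u v where uv: "p = (u, v)" by (cases p)
    have "{u, v} \<in> A" using p uv unfolding P_def P'_def by auto
    then have "u \<in> U" "v \<in> U" "{u, v} \<in> F" unfolding U_def using AF by auto
    then show "?a (fst p) (snd p) * (f (fst p) - f (snd p))^2 = 4"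
      using p uv unfolding P_def P'_def f_def by auto
  qed
  also have "\<dots> = 8 * real (card P)" using finP disj cardP' by (simp add: card_Un_disjoint)
  finally have num: "qq f \<ge> 4 * real (card P)" by simp
  define D where "D = boundary F A"
  have DF: "D \<subseteq> F" "A \<inter> D = {}" unfolding D_def boundary_def by auto
  have finA: "finite A" "finite D" using AF DF finF finite_subset by blast+
  have "Nf f = (\<Sum>v\<in>W. if v \<in> U then dg v else 0)"
    unfolding Nf_def f_def by (intro sum.cong) auto
  also have "\<dots> = (\<Sum>v\<in>U. dg v)" using UW finW by (simp add: sum.If_cases Int_absorb1)
  also have "\<dots> = (\<Sum>v\<in>U. \<Sum>e\<in>F. if v \<in> e then 1 else 0)"
    unfolding dg_def degree_def using finF by (simp add: sum.If_cases Int_def)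
  also have "\<dots> = (\<Sum>e\<in>F. \<Sum>v\<in>U. if v \<in> e then 1 else 0)" by (rule sum.swap)
  also have "\<dots> \<le> (\<Sum>e\<in>F. if e \<in> A \<union> D then 2 else 0)"
  proof (rule sum_mono)
    fix e assume e: "e \<in> F"
    have finU: "finite U" using UW finW finite_subset by blast
    have s: "(\<Sum>v\<in>U. if v \<in> e then 1 else 0) = real (card (U \<inter> e))"
      using finU by (simp add: sum.If_cases)
    show "(\<Sum>v\<in>U. if v \<in> e then 1 else 0) \<le> (if e \<in> A \<union> D then 2 else (0::real))"
    proof (cases "e \<in> A \<union> D")
      case True
      obtain a b where "e = {a, b}" using edgeD e by blast
      then have "card e \<le> 2" by (simp add: card_insert_if)
      moreover have "card (U \<inter> e) \<le> card e"
        using \<open>e = {a, b}\<close> by (intro card_mono) auto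
      ultimately have "card (U \<inter> e) \<le> 2" by linarith
      then show ?thesis using True s by simp
    next
      case False
      then have "U \<inter> e = {}" using e unfolding D_def boundary_def restr_vertices_def U_def by auto
      then show ?thesis using False s by simp
    qed
  qed
  also have "\<dots> = 2 * real (card (A \<union> D))"
  proof -
    have "F \<inter> {e. e \<in> A \<or> e \<in> D} = A \<union> D" using DF AF by blast
    then show ?thesis using finF by (simp add: sum.If_cases Un_def)
  qed
  also have "\<dots> = 2 * real (card A + card D)"
    using finA DF by (simp add: card_Un_disjoint)
  finally have den: "Nf f \<le> 2 * real (card A + card D)" .
  obtain e0 where e0: "e0 \<in> A" using Ane by blast
  then obtain a b where ab: "e0 = {a, b}" using AF edgeD by blast
  have "a \<in> U" unfolding U_def using e0 ab by auto
  then have Npos: "Nf f > 0" using UW by (intro Nf_pos[of a]) (auto simp: f_def)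
  have "2 * real k / real (card A + card D) \<le> 4 * real (card P) / (2 * real (card A + card D))"
  proof -
    have kk: "4 * real k \<le> 4 * real (card P)" using k unfolding P_def by simp
    have "4 * real k / (2 * real (card A + card D)) = (2 * (2 * real k)) / (2 * real (card A + card D))"
      by simp
    also have "\<dots> = 2 * real k / real (card A + card D)"
      by (rule mult_divide_mult_cancel_left) simp
    finally have "2 * real k / real (card A + card D) = 4 * real k / (2 * real (card A + card D))" by simp
    also have "\<dots> \<le> 4 * real (card P) / (2 * real (card A + card D))"
      using kk by (intro divide_right_mono) auto
    finally show ?thesis .
  qed
  also have "\<dots> \<le> qq f / (2 * real (card A + card D))"
    using num by (simp add: divide_right_mono)
  also have "\<dots> \<le> qq f / Nf f"
    using num den Npos by (intro divide_left_mono) auto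
  also have "\<dots> \<le> lambda_max W F" by (rule lam_ge[OF Npos])
  finally show ?thesis unfolding D_def .
qed

end

lemma rank_pos:
  assumes fin: "finite V" and ed: "edges_in V A" and ne: "A \<noteq> {}"
  shows "graph_rank V A \<ge> 1"
proof -
  obtain e where e: "e \<in> A" using ne by blast
  then obtain a b where ab: "a \<noteq> b" "a \<in> V" "b \<in> V" "e = {a, b}" using ed unfolding edges_in_def by blast
  let ?R = "conn_rel V A"
  have eR: "equiv V ?R" by (rule equiv_conn)
  have "(a, b) \<in> SR A" using e ab unfolding SR_def by auto
  then have abR: "(a, b) \<in> ?R" using ab unfolding conn_rel_SR by auto
  then have Rab: "?R `` {b} = ?R `` {a}" using eR by (simp add: equiv_class_eq)
  have "V // ?R = (\<lambda>x. ?R `` {x}) ` V" unfolding quotient_def by auto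
  also have "\<dots> = (\<lambda>x. ?R `` {x}) ` (V - {b})"
  proof
    show "(\<lambda>x. ?R `` {x}) ` V \<subseteq> (\<lambda>x. ?R `` {x}) ` (V - {b})"
    proof
      fix Z assume "Z \<in> (\<lambda>x. ?R `` {x}) ` V"
      then obtain x where x: "x \<in> V" "Z = ?R `` {x}" by blast
      show "Z \<in> (\<lambda>x. ?R `` {x}) ` (V - {b})"
      proof (cases "x = b")
        case True
        then have "Z = ?R `` {a}" using x Rab by simp
        then show ?thesis using ab by blast
      next
        case False then show ?thesis using x by blast
      qed
    qed
  qed auto
  finally have "card (V // ?R) \<le> card (V - {b})" using fin by (simp add: card_image_le)
  also have "\<dots> = card V - 1" using ab by simp
  finally have "num_components V A \<le> card V - 1" unfolding num_components_def .
  moreover have "card V \<ge> 2"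
  proof -
    have "{a, b} \<subseteq> V" using ab by auto
    then have "card {a, b} \<le> card V" using fin by (rule card_mono[rotated])
    then show ?thesis using ab by simp
  qed
  ultimately show ?thesis unfolding graph_rank_def by linarith
qed

lemma key:
  assumes g: "gr W F" and AF: "A \<subseteq> F" and ne: "A \<noteq> {}" and fin: "finite V" and ed: "edges_in V A"
  shows "lambda_max W F \<ge> 2 * real (graph_rank V A) / real (card A + card (boundary F A))"
proof -
  have finA: "finite A" using gr.finF[OF g] AF finite_subset by blast
  obtain \<sigma> where \<sigma>: "card V \<le> card (PP A \<sigma>) + num_components V A"
    using sigma_exists[OF fin finA ed] by blast
  have "graph_rank V A \<le> card {(u, v). {u, v} \<in> A \<and> \<sigma> u \<and> \<not> \<sigma> v}"
    using \<sigma> unfolding graph_rank_def PP_def by linarith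
  then show ?thesis by (rule gr.test[OF g AF ne])
qed

lemma gr_sub:
  assumes "simple_graph V E" "A \<subseteq> E"
  shows "gr (restr_vertices A) A"
proof
  have finE: "finite E"
  proof -
    have "E \<subseteq> Pow V" using assms(1) unfolding simple_graph_def by fastforce
    then show ?thesis using assms(1) finite_subset unfolding simple_graph_def by (metis finite_Pow_iff)
  qed
  have fe: "\<forall>e\<in>A. finite e" using assms unfolding simple_graph_def by fastforce
  show "simple_graph (restr_vertices A) A"
    unfolding simple_graph_def restr_vertices_def
  proof
    show "finite (\<Union>A)" using finE assms(2) fe finite_subset by (metis finite_Union)
    show "\<forall>e\<in>A. \<exists>u v. u \<noteq> v \<and> u \<in> \<Union>A \<and> v \<in> \<Union>A \<and> e = {u, v}"
    proof
      fix e assume e: "e \<in> A"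
      then obtain u v where "u \<noteq> v" "e = {u, v}" using assms unfolding simple_graph_def by blast
      then show "\<exists>u v. u \<noteq> v \<and> u \<in> \<Union>A \<and> v \<in> \<Union>A \<and> e = {u, v}" using e by blast
    qed
  qed
  show "no_isolated (restr_vertices A) A" unfolding no_isolated_def restr_vertices_def by blast
qed

theorem theorem3p16:
  fixes V :: "'a set" and E :: "'a set set"
  assumes "simple_graph V E" and "E \<noteq> {}" and "no_isolated V E"
  shows "lambda_max V E \<ge> 2 / density V E
    \<and> (\<forall>A. A \<subseteq> E \<and> A \<noteq> {} \<longrightarrow>
           lambda_max V E \<ge> 2 / density V A * (real (card A) / real (card A + card (boundary E A))))
    \<and> (uniformly_dense V E \<longrightarrow>
           (\<forall>A. A \<subseteq> E \<and> A \<noteq> {} \<longrightarrow> lambda_max (restr_vertices A) A \<ge> 2 / density V E))"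
proof -
  have g: "gr V E" using assms by unfold_locales
  have fin: "finite V" using assms(1) unfolding simple_graph_def by simp
  have edA: "edges_in V A" if "A \<subseteq> E" for A
    using assms(1) that unfolding simple_graph_def edges_in_def by blast
  have finA: "finite A" if "A \<subseteq> E" for A using gr.finF[OF g] that finite_subset by blast
  have dens: "2 / density V A = 2 * real (graph_rank V A) / real (card A)" if "A \<subseteq> E" "A \<noteq> {}" for A
    unfolding density_def by simp
  have P2: "lambda_max V E \<ge> 2 / density V A * (real (card A) / real (card A + card (boundary E A)))"
    if A: "A \<subseteq> E" "A \<noteq> {}" for A
  proof -
    have cA: "card A > 0" using finA[OF A(1)] A(2) card_gt_0_iff by blast
    have "2 / density V A * (real (card A) / real (card A + card (boundary E A)))
        = 2 * real (graph_rank V A) / real (card A + card (boundary E A))"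
      unfolding dens[OF A] using cA by (simp add: field_simps)
    also have "\<dots> \<le> lambda_max V E" by (rule key[OF g A fin edA[OF A(1)]])
    finally show ?thesis .
  qed
  have P1: "lambda_max V E \<ge> 2 / density V E"
  proof -
    have "boundary E E = {}" unfolding boundary_def by simp
    moreover have "card E > 0" using finA[of E] assms(2) card_gt_0_iff by blast
    ultimately show ?thesis using P2[of E] assms(2) by simp
  qed
  have P3: "lambda_max (restr_vertices A) A \<ge> 2 / density V E"
    if ud: "uniformly_dense V E" and A: "A \<subseteq> E" "A \<noteq> {}" for A
  proof -
    have cA: "card A > 0" using finA[OF A(1)] A(2) card_gt_0_iff by blast
    have r: "graph_rank V A \<ge> 1" using rank_pos[OF fin edA[OF A(1)] A(2)] .
    have dpos: "density V A > 0" unfolding density_def using cA r by simp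
    have dle: "density V A \<le> density V E" using ud A unfolding uniformly_dense_def by blast
    have "2 / density V E \<le> 2 / density V A" using dpos dle by (simp add: frac_le)
    also have "\<dots> = 2 * real (graph_rank V A) / real (card A + card (boundary A A))"
      unfolding dens[OF A] boundary_def by simp
    also have "\<dots> \<le> lambda_max (restr_vertices A) A"
      by (rule key[OF gr_sub[OF assms(1) A(1)] order_refl A(2) fin edA[OF A(1)]])
    finally show ?thesis .
  qed
  show ?thesis using P1 P2 P3 by blast
qed

end
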